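(* Let $E$ be a finite set of events with timestamps $\tau(e)\in\mathbb{R}$, let $t_w>0$ be real and $n\ge1$ an integer, and let $\mathcal{I}$ be the family of all $T\subseteq E$ with $|\{e\in T:\tau(e)\in[t,t+t_w)\}|\le n$ for every $t\in\mathbb{R}$. Let $Y\subseteq E$ and let $J_{\min}$, $J_{\max}$ be bases of $Y$ of minimum and maximum cardinality, respectively. For $e\in E$ let $\mathrm{ball}(e)=(\tau(e)-t_w,\tau(e)+t_w)$. Define the DeletionStep, taking a pair $(J_{\min},J_{\max})$ with $J_{\min}\neq\emptyset$ to a pair $(J'_{\min},J'_{\max})$: let $b$ be an element of $J_{\min}$ with minimum timestamp and set $J'_{\min}=J_{\min}\setminus\{b\}$; list the elements of $\{a\in J_{\max}:\tau(a)\in\mathrm{ball}(b)\}$ in increasing order of timestamp and let $J'_{\max}$ be $J_{\max}$ with the first two of these removed (or with all of them removed if there are fewer than two). Then the invariant "for every $a\in J_{\max}$ there exists $c\in J_{\min}$ with $\tau(c)\in\mathrm{ball}(a)$" holds for the initial pair $(J_{\min},J_{\max})$, and it also holds (with $J_{\min},J_{\max}$ replaced by the current sets) for the pair obtained after any number of successive iterations of DeletionStep starting from $(J_{\min},J_{\max})$.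
   Context: A base of $Y$ is an inclusion-maximal subset $J\subseteq Y$ with $J\in\mathcal{I}$. *)

theory Defs
  imports Complex_Main
begin

definition indep :: "'a set \<Rightarrow> ('a \<Rightarrow> real) \<Rightarrow> real \<Rightarrow> nat \<Rightarrow> 'a set \<Rightarrow> bool" where
  "indep E \<tau> tw n T \<longleftrightarrow> T \<subseteq> E \<and> (\<forall>t::real. card {e \<in> T. \<tau> e \<in> {t..<t + tw}} \<le> n)"

definition is_base :: "'a set \<Rightarrow> ('a \<Rightarrow> real) \<Rightarrow> real \<Rightarrow> nat \<Rightarrow> 'a set \<Rightarrow> 'a set \<Rightarrow> bool" where
  "is_base E \<tau> tw n Y J \<longleftrightarrow> J \<subseteq> Y \<and> indep E \<tau> tw n J \<and>
     (\<forall>J'. J \<subseteq> J' \<and> J' \<subseteq> Y \<and> indep E \<tau> tw n J' \<longrightarrow> J' = J)"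

definition ball_ev :: "('a \<Rightarrow> real) \<Rightarrow> real \<Rightarrow> 'a \<Rightarrow> real set" where
  "ball_ev \<tau> tw e = {\<tau> e - tw <..< \<tau> e + tw}"

(* One DeletionStep (as a relation, since ties in timestamps may be broken arbitrarily):
   b is an element of Jmin of minimum timestamp, Jmin' = Jmin - {b};
   A = elements of Jmax with timestamp in ball(b); R = first min(2,|A|) of A in
   increasing timestamp order; Jmax' = Jmax - R. *)
definition deletion_step :: "('a \<Rightarrow> real) \<Rightarrow> real \<Rightarrow> ('a set \<times> 'a set) \<Rightarrow> ('a set \<times> 'a set) \<Rightarrow> bool" where
  "deletion_step \<tau> tw p q \<longleftrightarrow>
     (let Jmin = fst p; Jmax = snd p in
      Jmin \<noteq> {} \<and>
      (\<exists>b \<in> Jmin. (\<forall>c \<in> Jmin. \<tau> b \<le> \<tau> c) \<and>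
        (let A = {a \<in> Jmax. \<tau> a \<in> ball_ev \<tau> tw b} in
         \<exists>R \<subseteq> A. card R = min 2 (card A) \<and>
           (\<forall>x \<in> R. \<forall>y \<in> A - R. \<tau> x \<le> \<tau> y) \<and>
           q = (Jmin - {b}, Jmax - R))))"

definition ball_invariant :: "('a \<Rightarrow> real) \<Rightarrow> real \<Rightarrow> 'a set \<Rightarrow> 'a set \<Rightarrow> bool" where
  "ball_invariant \<tau> tw Jmin Jmax \<longleftrightarrow> (\<forall>a \<in> Jmax. \<exists>c \<in> Jmin. \<tau> c \<in> ball_ev \<tau> tw a)"

end

theory Submission
  imports Defs
begin

definition cntC :: "('a \<Rightarrow> real) \<Rightarrow> 'a set \<Rightarrow> real \<Rightarrow> real \<Rightarrow> 'a set" where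
  "cntC \<tau> S lo hi = {a\<in>S. lo \<le> \<tau> a \<and> \<tau> a \<le> hi}"

definition cntO :: "('a \<Rightarrow> real) \<Rightarrow> 'a set \<Rightarrow> real \<Rightarrow> real \<Rightarrow> 'a set" where
  "cntO \<tau> S lo hi = {a\<in>S. lo < \<tau> a \<and> \<tau> a < hi}"

lemma base_bound:
  assumes fin: "finite E" and tw: "tw > 0" and YE: "Y \<subseteq> E"
    and B: "is_base E \<tau> tw n Y J" and I: "indep E \<tau> tw n I" "I \<subseteq> Y"
  shows "card (cntC \<tau> I s u) \<le> 2 * card (cntO \<tau> J (s - tw) (u + tw))"
proof -
  have finI: "finite I" using I fin unfolding indep_def by (meson finite_subset)
  have Jind: "indep E \<tau> tw n J" and JY: "J \<subseteq> Y"
    and Jmax: "\<And>J'. J \<subseteq> J' \<Longrightarrow> J' \<subseteq> Y \<Longrightarrow> indep E \<tau> tw n J' \<Longrightarrow> J' = J"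
    using B unfolding is_base_def by auto
  have finJ: "finite J" using JY YE fin by (meson finite_subset)
  have Iwin: "\<And>t. card {e\<in>I. \<tau> e \<in> {t..<t+tw}} \<le> n" using I(1) unfolding indep_def by auto
  show ?thesis
  proof (induction "card (cntC \<tau> I s u)" arbitrary: s rule: less_induct)
    case less
    define X where "X = cntC \<tau> I s u"
    define K where "K = cntO \<tau> J (s - tw) (u + tw)"
    have finX: "finite X" using finI unfolding X_def cntC_def by auto
    have finK: "finite K" using finJ unfolding K_def cntO_def by auto
    show ?case
    proof (cases "X - J = {}")
      case True
      then have "X \<subseteq> K" using tw unfolding X_def K_def cntC_def cntO_def by force
      then have "card X \<le> card K" by (rule card_mono[OF finK])
      thus ?thesis unfolding X_def K_def by simp
    next
      case False
      define m where "m = Min (\<tau> ` (X - J))"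
      have "m \<in> \<tau> ` (X - J)" unfolding m_def using False finX by (intro Min_in) auto
      then obtain x where x: "x \<in> X - J" "\<tau> x = m" by auto
      have xmin: "\<And>y. y \<in> X - J \<Longrightarrow> \<tau> x \<le> \<tau> y"
        using x(2) finX unfolding m_def by (simp add: Min_le)
      have xI: "x \<in> I" and sx: "s \<le> \<tau> x" and xu: "\<tau> x \<le> u" and xJ: "x \<notin> J"
        using x(1) unfolding X_def cntC_def by auto
      have "\<not> indep E \<tau> tw n (insert x J)"
      proof
        assume "indep E \<tau> tw n (insert x J)"
        then have "insert x J = J" using Jmax[of "insert x J"] JY xI I(2) by auto
        thus False using xJ by auto
      qed
      moreover have "insert x J \<subseteq> E" using xI I(2) YE JY by auto
      ultimately obtain t where t: "card {e\<in>insert x J. \<tau> e \<in> {t..<t+tw}} > n"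
        unfolding indep_def using not_le by blast
      have Jwin: "card {e\<in>J. \<tau> e \<in> {t..<t+tw}} \<le> n" using Jind unfolding indep_def by auto
      have xt: "\<tau> x \<in> {t..<t+tw}"
      proof (rule ccontr)
        assume "\<tau> x \<notin> {t..<t+tw}"
        then have "{e\<in>insert x J. \<tau> e \<in> {t..<t+tw}} = {e\<in>J. \<tau> e \<in> {t..<t+tw}}" by auto
        thus False using t Jwin by simp
      qed
      define W where "W = {e\<in>J. \<tau> e \<in> {t..<t+tw}}"
      have "{e\<in>insert x J. \<tau> e \<in> {t..<t+tw}} = insert x W" using xt unfolding W_def by auto
      moreover have "finite W" using finJ unfolding W_def by auto
      ultimately have "card {e\<in>insert x J. \<tau> e \<in> {t..<t+tw}} \<le> card W + 1"
        by (simp add: card_insert_if)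
      then have Wn: "n \<le> card W" using t by simp
      define X1 where "X1 = {a\<in>X. \<tau> a < t}"
      define X2 where "X2 = {a\<in>X. t \<le> \<tau> a \<and> \<tau> a < t + 2*tw}"
      define X3 where "X3 = cntC \<tau> I (t + 2*tw) u"
      define K1 where "K1 = {c\<in>J. s - tw < \<tau> c \<and> \<tau> c < t}"
      define K3 where "K3 = cntO \<tau> J (t + 2*tw - tw) (u + tw)"
      have XU: "X \<subseteq> X1 \<union> X2 \<union> X3" unfolding X_def X1_def X2_def X3_def cntC_def by auto
      have X1K1: "X1 \<subseteq> K1"
      proof
        fix a assume a: "a \<in> X1"
        then have "a \<in> J"
          using xmin[of a] xt unfolding X1_def by force
        thus "a \<in> K1" using a tw unfolding X1_def K1_def X_def cntC_def by auto
      qed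
      have finK1: "finite K1" using finJ unfolding K1_def by auto
      have cX1: "card X1 \<le> card K1" by (rule card_mono[OF finK1 X1K1])
      have "X2 \<subseteq> {e\<in>I. \<tau> e \<in> {t..<t+tw}} \<union> {e\<in>I. \<tau> e \<in> {t+tw..<t+tw+tw}}"
        unfolding X2_def X_def cntC_def by auto
      then have "card X2 \<le> card ({e\<in>I. \<tau> e \<in> {t..<t+tw}} \<union> {e\<in>I. \<tau> e \<in> {t+tw..<t+tw+tw}})"
        using finI by (intro card_mono) auto
      also have "\<dots> \<le> card {e\<in>I. \<tau> e \<in> {t..<t+tw}} + card {e\<in>I. \<tau> e \<in> {t+tw..<t+tw+tw}}"
        by (rule card_Un_le)
      also have "\<dots> \<le> n + n" using Iwin[of t] Iwin[of "t+tw"] by simp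
      finally have cX2: "card X2 \<le> 2 * card W" using Wn by simp
      have X3X: "X3 \<subset> X"
      proof -
        have "X3 \<subseteq> X" using sx xt tw unfolding X3_def X_def cntC_def by auto
        moreover have "x \<in> X - X3" using x(1) xt tw unfolding X3_def cntC_def by auto
        ultimately show ?thesis by blast
      qed
      have "card X3 < card X" using psubset_card_mono[OF finX X3X] .
      then have cX3: "card X3 \<le> 2 * card K3"
        using less(1)[of "t + 2*tw"] unfolding X3_def K3_def X_def by simp
      have "card X \<le> card (X1 \<union> X2 \<union> X3)"
        using XU finI unfolding X1_def X2_def X3_def cntC_def X_def by (intro card_mono) auto
      also have "\<dots> \<le> card X1 + card X2 + card X3"
        by (meson add_mono_thms_linordered_semiring(3) card_Un_le le_trans)
      also have "\<dots> \<le> 2 * (card K1 + card W + card K3)" using cX1 cX2 cX3 by simp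
      also have "card K1 + card W + card K3 = card (K1 \<union> W \<union> K3)"
      proof -
        have fW: "finite W" "finite K3" using finJ unfolding W_def K3_def cntO_def by auto
        have d1: "K1 \<inter> W = {}" unfolding K1_def W_def by auto
        have d2: "(K1 \<union> W) \<inter> K3 = {}" using tw unfolding K1_def W_def K3_def cntO_def by auto
        show ?thesis using card_Un_disjoint[OF finK1 fW(1) d1]
            card_Un_disjoint[of "K1 \<union> W" K3] d2 finK1 fW by simp
      qed
      also have "card (K1 \<union> W \<union> K3) \<le> card K"
      proof -
        have "K1 \<union> W \<union> K3 \<subseteq> K"
          using xt sx xu tw unfolding K1_def W_def K3_def K_def cntO_def by auto
        thus ?thesis by (rule card_mono[OF finK])
      qed
      finally show ?thesis unfolding X_def K_def by simp
    qed
  qed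
qed


definition Hinv :: "('a \<Rightarrow> real) \<Rightarrow> real \<Rightarrow> 'a set \<Rightarrow> 'a set \<Rightarrow> bool" where
  "Hinv \<tau> tw P Q \<longleftrightarrow> finite P \<and> finite Q \<and>
     (\<forall>s u. card (cntC \<tau> Q s u) \<le> 2 * card (cntO \<tau> P (s - tw) (u + tw)))"

lemma Hinv_ball:
  assumes "Hinv \<tau> tw P Q"
  shows "ball_invariant \<tau> tw P Q"
  unfolding ball_invariant_def
proof
  fix a assume a: "a \<in> Q"
  have fQ: "finite Q" and fP: "finite P" using assms unfolding Hinv_def by auto
  have "a \<in> cntC \<tau> Q (\<tau> a) (\<tau> a)" using a unfolding cntC_def by auto
  then have "card (cntC \<tau> Q (\<tau> a) (\<tau> a)) > 0" using fQ unfolding cntC_def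
    by (metis (no_types, lifting) card_gt_0_iff empty_iff finite_subset mem_Collect_eq subsetI)
  then have "card (cntO \<tau> P (\<tau> a - tw) (\<tau> a + tw)) > 0" using assms unfolding Hinv_def
    by (metis gr0I le_zero_eq mult_0_right)
  then obtain c where "c \<in> cntO \<tau> P (\<tau> a - tw) (\<tau> a + tw)"
    by (metis card_gt_0_iff ex_in_conv)
  thus "\<exists>c\<in>P. \<tau> c \<in> ball_ev \<tau> tw a" unfolding cntO_def ball_ev_def by auto
qed

lemma Hinv_step:
  assumes H: "Hinv \<tau> tw P Q" and st: "deletion_step \<tau> tw (P, Q) (P', Q')" and tw: "tw > 0"
  shows "Hinv \<tau> tw P' Q'"
proof -
  have fQ: "finite Q" and fP: "finite P"
    and HH: "\<And>s u. card (cntC \<tau> Q s u) \<le> 2 * card (cntO \<tau> P (s - tw) (u + tw))"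
    using H unfolding Hinv_def by auto
  define A where "A b = {a \<in> Q. \<tau> a \<in> ball_ev \<tau> tw b}" for b
  obtain b R where b: "b \<in> P" "\<And>c. c \<in> P \<Longrightarrow> \<tau> b \<le> \<tau> c"
    and R: "R \<subseteq> A b" "card R = min 2 (card (A b))" "\<And>x y. x \<in> R \<Longrightarrow> y \<in> A b - R \<Longrightarrow> \<tau> x \<le> \<tau> y"
    and P': "P' = P - {b}" and Q': "Q' = Q - R"
  proof -
    from st obtain b where "b \<in> P" "\<forall>c\<in>P. \<tau> b \<le> \<tau> c"
      "\<exists>R \<subseteq> A b. card R = min 2 (card (A b)) \<and> (\<forall>x \<in> R. \<forall>y \<in> A b - R. \<tau> x \<le> \<tau> y)
         \<and> (P', Q') = (P - {b}, Q - R)"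
      unfolding deletion_step_def Let_def A_def by auto
    then show ?thesis using that by blast
  qed
  have fA: "finite (A b)" using fQ unfolding A_def by auto
  have noleft: "\<tau> y > \<tau> b - tw" if y: "y \<in> Q" for y
  proof -
    have "y \<in> cntC \<tau> Q (\<tau> y) (\<tau> y)" using y unfolding cntC_def by auto
    then have "card (cntC \<tau> Q (\<tau> y) (\<tau> y)) > 0" using fQ unfolding cntC_def
      by (metis (no_types, lifting) card_gt_0_iff empty_iff finite_subset mem_Collect_eq subsetI)
    then have "card (cntO \<tau> P (\<tau> y - tw) (\<tau> y + tw)) > 0" using HH
      by (metis gr0I le_zero_eq mult_0_right)
    then obtain c where "c \<in> cntO \<tau> P (\<tau> y - tw) (\<tau> y + tw)"
      by (metis card_gt_0_iff ex_in_conv)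
    then have "c \<in> P" "\<tau> c < \<tau> y + tw" unfolding cntO_def by auto
    with b(2) show ?thesis by force
  qed
  have "card (cntC \<tau> Q' s u) \<le> 2 * card (cntO \<tau> P' (s - tw) (u + tw))" for s u
  proof (cases "s - tw < \<tau> b \<and> \<tau> b < u + tw")
    case False
    have "cntO \<tau> P' (s - tw) (u + tw) = cntO \<tau> P (s - tw) (u + tw)"
      using False unfolding P' cntO_def by auto
    moreover have "card (cntC \<tau> Q' s u) \<le> card (cntC \<tau> Q s u)"
      using fQ unfolding Q' cntC_def by (intro card_mono) auto
    ultimately show ?thesis using HH[of s u] by simp
  next
    case True
    note bT = True
    have fP's: "finite (cntO \<tau> P' (s - tw) (u + tw))" using fP unfolding P' cntO_def by auto
    have Pins: "cntO \<tau> P (s - tw) (u + tw) = insert b (cntO \<tau> P' (s - tw) (u + tw))"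
      using True b(1) unfolding P' cntO_def by auto
    have cPins: "card (cntO \<tau> P (s - tw) (u + tw)) = card (cntO \<tau> P' (s - tw) (u + tw)) + 1"
      unfolding Pins using fP's unfolding P' cntO_def by simp
    show ?thesis
    proof (cases "\<exists>y \<in> cntC \<tau> Q' s u. y \<in> A b")
      case True
      then obtain y where y: "y \<in> cntC \<tau> Q' s u" "y \<in> A b" by auto
      have yR: "y \<in> A b - R" using y unfolding Q' cntC_def by auto
      have "card R < card (A b)"
        using yR R(1) fA by (metis Diff_iff psubsetI psubset_card_mono)
      then have "card R = 2" using R(2) by simp
      then obtain r1 r2 where r: "R = {r1, r2}" "r1 \<noteq> r2" by (meson card_2_iff)
      define s' where "s' = min s (min (\<tau> r1) (\<tau> r2))"
      have rA: "r1 \<in> A b" "r2 \<in> A b" using r R(1) by auto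
      have ru: "\<tau> r1 \<le> u" "\<tau> r2 \<le> u"
        using R(3)[OF _ yR, of r1] R(3)[OF _ yR, of r2] r y(1) unfolding cntC_def by auto
      have rb: "\<tau> r1 > \<tau> b - tw" "\<tau> r2 > \<tau> b - tw"
        using rA unfolding A_def ball_ev_def by auto
      have sub: "cntC \<tau> Q' s u \<union> R \<subseteq> cntC \<tau> Q s' u"
        using ru rA unfolding Q' cntC_def s'_def A_def r by auto
      have disj: "cntC \<tau> Q' s u \<inter> R = {}" unfolding Q' cntC_def by auto
      have fC: "finite (cntC \<tau> Q' s u)" using fQ unfolding Q' cntC_def by auto
      have "card (cntC \<tau> Q' s u) + 2 = card (cntC \<tau> Q' s u \<union> R)"
        using card_Un_disjoint[OF fC _ disj] r by simp
      also have "\<dots> \<le> card (cntC \<tau> Q s' u)"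
        using sub fQ unfolding cntC_def by (intro card_mono) auto
      also have "\<dots> \<le> 2 * card (cntO \<tau> P (s' - tw) (u + tw))" by (rule HH)
      also have "cntO \<tau> P (s' - tw) (u + tw) = cntO \<tau> P (s - tw) (u + tw)"
      proof -
        have "\<And>c. c \<in> P \<Longrightarrow> s' - tw < \<tau> c \<and> s - tw < \<tau> c"
          using b(2) rb bT unfolding s'_def by fastforce
        thus ?thesis unfolding cntO_def by auto
      qed
      finally show ?thesis using cPins by simp
    next
      case False
      define s' where "s' = max s (\<tau> b + tw)"
      have "cntC \<tau> Q' s u \<subseteq> cntC \<tau> Q s' u"
      proof
        fix y assume y: "y \<in> cntC \<tau> Q' s u"
        then have yQ: "y \<in> Q" and "y \<notin> A b" using False unfolding Q' cntC_def by auto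
        then have "\<tau> y \<ge> \<tau> b + tw" using noleft[OF yQ] unfolding A_def ball_ev_def by auto
        thus "y \<in> cntC \<tau> Q s' u" using y unfolding Q' cntC_def s'_def by auto
      qed
      then have "card (cntC \<tau> Q' s u) \<le> card (cntC \<tau> Q s' u)"
        using fQ unfolding cntC_def by (intro card_mono) auto
      also have "\<dots> \<le> 2 * card (cntO \<tau> P (s' - tw) (u + tw))" by (rule HH)
      also have "card (cntO \<tau> P (s' - tw) (u + tw)) \<le> card (cntO \<tau> P' (s - tw) (u + tw))"
        using fP's unfolding s'_def P' cntO_def by (intro card_mono) auto
      finally show ?thesis by simp
    qed
  qed
  moreover have "finite P'" "finite Q'" using fP fQ unfolding P' Q' by auto
  ultimately show ?thesis unfolding Hinv_def by auto
qed

theorem lemma3: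
  fixes E :: "'a set" and \<tau> :: "'a \<Rightarrow> real" and tw :: real and n :: nat
    and Y Jmin Jmax :: "'a set"
  assumes "finite E" and "tw > 0" and "n \<ge> 1" and "Y \<subseteq> E"
    and "is_base E \<tau> tw n Y Jmin" and "\<forall>J. is_base E \<tau> tw n Y J \<longrightarrow> card Jmin \<le> card J"
    and "is_base E \<tau> tw n Y Jmax" and "\<forall>J. is_base E \<tau> tw n Y J \<longrightarrow> card J \<le> card Jmax"
  shows "ball_invariant \<tau> tw Jmin Jmax \<and>
         (\<forall>P Q. (deletion_step \<tau> tw)\<^sup>*\<^sup>* (Jmin, Jmax) (P, Q) \<longrightarrow> ball_invariant \<tau> tw P Q)"
proof -
  have H0: "Hinv \<tau> tw Jmin Jmax"
  proof -
    have "finite Jmin" "finite Jmax" using assms(1,4,5,7) unfolding is_base_def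
      by (meson finite_subset)+
    moreover have "card (cntC \<tau> Jmax s u) \<le> 2 * card (cntO \<tau> Jmin (s - tw) (u + tw))" for s u
      using base_bound[OF assms(1,2,4,5)] assms(7) unfolding is_base_def by blast
    ultimately show ?thesis unfolding Hinv_def by auto
  qed
  have "Hinv \<tau> tw (fst q) (snd q)" if "(deletion_step \<tau> tw)\<^sup>*\<^sup>* (Jmin, Jmax) q" for q
    using that
  proof (induction rule: rtranclp_induct)
    case base
    then show ?case using H0 by simp
  next
    case (step y z)
    then show ?case using Hinv_step[of \<tau> tw "fst y" "snd y" "fst z" "snd z"] assms(2) by simp
  qed
  then show ?thesis using H0 Hinv_ball by (metis fst_conv snd_conv)
qed

end
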